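(* Let $b\in\mathbb{R}$ and let $(r,W,V,N,\delta)$ be a smooth solution, defined on an interval $(-\infty,\rho_* )$ with $r>0$ and $N>0$ there, of the system \[ \dot r = rN,\quad \dot W = V,\quad \dot V = (2N-\kappa)V - W(1-W^2),\quad \dot N = (\kappa-N)N - \frac{2V^2}{r^2},\quad \big(e^{-\delta}N\big)^{\cdot} = (\kappa-N)e^{-\delta}N, \] where $\dot{}=d/d\rho$ and \[ \kappa=\frac{1}{2N}\left(1+N^2+\frac{2V^2}{r^2}-\frac{(1-W^2)^2}{r^2}\right), \] which is regular at the origin with parameter $b$, i.e. as $\rho\to-\infty$, \[ r\sim e^{\rho},\quad W\sim -1+be^{2\rho},\quad V\sim 2be^{2\rho},\quad N\sim 1-2b^2e^{2\rho},\quad \delta\sim -4b^2e^{2\rho}, \] (these being the leading terms of the asymptotic expansion of the unique local solution determined by $b$, which correspond to $W=-1+br^2+O(r^4)$, $A=N^2=1-4b^2r^2+O(r^4)$, $\delta=-4b^2r^2+O(r^4)$ in the areal radius $r$). Then for all $\rho\in(-\infty,\rho_* )$, \[ 1\le \kappa(\rho)\le 2-N(\rho). \]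
   Context: This system is the static spherically symmetric Einstein–Yang–Mills system with gauge group $SU(2)$, for the metric $ds^2=-e^{-2\delta}N^2dt^2+r^2(d\rho^2+d\Omega^2)$ (with $d\Omega^2$ the round metric on the unit 2-sphere) and Yang–Mills potential $W$; the radial coordinate $\rho$ is related to the areal radius $r$ by $dr=rN\,d\rho$, and $N=\sqrt{A}$ where $A$ is the metric function in $ds^2=-e^{-2\delta}A\,dt^2+dr^2/A+r^2d\Omega^2$. *)

theory Defs
  imports "HOL-Analysis.Analysis" "HOL-Library.Landau_Symbols"
begin

definition eym_kappa :: "real \<Rightarrow> real \<Rightarrow> real \<Rightarrow> real \<Rightarrow> real" where
  "eym_kappa r W V N =
     (1 / (2 * N)) * (1 + N\<^sup>2 + 2 * V\<^sup>2 / r\<^sup>2 - (1 - W\<^sup>2)\<^sup>2 / r\<^sup>2)"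

end

theory Submission imports Defs begin

lemma dkappa:
  fixes r W V N :: "real \<Rightarrow> real" and x :: real
  defines "k \<equiv> eym_kappa (r x) (W x) (V x) (N x)"
  assumes rp: "r x > 0" and np: "N x > 0"
    and dr: "(r has_real_derivative (r x * N x)) (at x)"
    and dW: "(W has_real_derivative (V x)) (at x)"
    and dV: "(V has_real_derivative ((2 * N x - k) * V x - W x * (1 - (W x)\<^sup>2))) (at x)"
    and dN: "(N has_real_derivative ((k - N x) * N x - 2 * (V x)\<^sup>2 / (r x)\<^sup>2)) (at x)"
  shows "((\<lambda>y. eym_kappa (r y) (W y) (V y) (N y)) has_real_derivative
            (1 - k\<^sup>2 + 2 * (V x)\<^sup>2 / (r x)\<^sup>2)) (at x)"
proof -
  define P where "P y = 1 + (N y)\<^sup>2 + 2 * (V y)\<^sup>2 / (r y)\<^sup>2 - (1 - (W y)\<^sup>2)\<^sup>2 / (r y)\<^sup>2" for y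
  have kP: "2 * N x * k = P x" unfolding k_def P_def eym_kappa_def using np by simp
  have U: "(1-(W x)^2)^2/(r x)^2 = 1 + (N x)^2 + 2*(V x)^2/(r x)^2 - 2*N x*k"
    using kP unfolding P_def by simp
  have dP0: "(P has_real_derivative
     (2 * (k - N x) * (N x)\<^sup>2 - 4 * k * (V x)\<^sup>2 / (r x)\<^sup>2 + 2 * N x * ((1 - (W x)\<^sup>2)\<^sup>2 / (r x)\<^sup>2))) (at x)"
    unfolding P_def
    using rp np apply (auto intro!: derivative_eq_intros dr dW dV dN)
    apply (simp add: field_simps power2_eq_square)
    apply algebra
    done
  have dP: "(P has_real_derivative
     (2 * (k - N x) * (N x)\<^sup>2 - 4 * k * (V x)\<^sup>2 / (r x)\<^sup>2 + 2 * N x * (1 + (N x)^2 + 2*(V x)^2/(r x)^2 - 2*N x*k))) (at x)"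
    using dP0 unfolding U .
  have eq: "(\<lambda>y. eym_kappa (r y) (W y) (V y) (N y)) = (\<lambda>y. P y / (2 * N y))"
    unfolding P_def eym_kappa_def by auto
  show ?thesis unfolding eq
    using rp np apply (auto intro!: derivative_eq_intros dP dN simp flip: kP)
    by (simp add: field_simps power2_eq_square)
qed
lemma cross:
  fixes f f' :: "real \<Rightarrow> real"
  assumes ab: "a \<le> b" and d: "\<And>x. x \<in> {a..b} \<Longrightarrow> (f has_real_derivative f' x) (at x)"
    and fa: "f a \<ge> c" and fb: "f b < c"
  shows "\<exists>x\<in>{a..<b}. f x = c \<and> f' x \<le> 0"
proof (rule ccontr)
  assume H: "\<not> ?thesis"
  have cont: "continuous_on {a..b} f"
    by (meson continuous_at_imp_continuous_on DERIV_isCont d)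
  define Z where "Z = {x \<in> {a..b}. f x = c}"
  have cZ: "closed Z" unfolding Z_def
    by (rule continuous_closed_preimage_constant[OF cont]) simp
  obtain y where y: "a \<le> y" "y \<le> b" "f y = c" using IVT2'[of f b c a] fa fb ab cont by force
  hence ne: "Z \<noteq> {}" unfolding Z_def by auto
  have bdd: "bdd_above Z" unfolding Z_def by (auto intro: bdd_aboveI[of _ b])
  define x0 where "x0 = Sup Z"
  have x0Z: "x0 \<in> Z" unfolding x0_def by (rule closed_contains_Sup[OF ne bdd cZ])
  hence x0: "a \<le> x0" "x0 \<le> b" "f x0 = c" unfolding Z_def by auto
  with fb have x0b: "x0 < b" by (cases "x0 = b") auto
  with H x0 have pos: "f' x0 > 0" by force
  obtain e where e: "e > 0" "\<And>h. h > 0 \<Longrightarrow> h < e \<Longrightarrow> f x0 < f (x0 + h)"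
    using DERIV_pos_inc_right[OF d[of x0] pos] x0 by force
  define h where "h = min (e/2) ((b - x0)/2)"
  have hh: "h \<le> (b - x0)/2" "h \<le> e/2" unfolding h_def by (rule min.cobounded2, rule min.cobounded1)
  have h: "h > 0" "h < e" "x0 + h \<le> b" using e x0b hh unfolding h_def by auto
  have "f (x0 + h) > c" using e(2)[OF h(1,2)] x0 by simp
  moreover have "continuous_on {x0+h..b} f" using cont x0 h by (auto intro: continuous_on_subset)
  ultimately obtain z where z: "x0 + h \<le> z" "z \<le> b" "f z = c"
    using IVT2'[of f b c "x0+h"] fb h by force
  hence "z \<in> Z" unfolding Z_def using x0 h by auto
  hence "z \<le> x0" unfolding x0_def by (rule cSup_upper[OF _ bdd])
  with z h show False by simp
qed

theorem lemma1:
  fixes b :: real and \<rho>s :: ereal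
    and r W V N \<delta> :: "real \<Rightarrow> real"
  assumes pos: "\<And>\<rho>. ereal \<rho> < \<rho>s \<Longrightarrow> r \<rho> > 0 \<and> N \<rho> > 0"
    and dr: "\<And>\<rho>. ereal \<rho> < \<rho>s \<Longrightarrow> (r has_real_derivative (r \<rho> * N \<rho>)) (at \<rho>)"
    and dW: "\<And>\<rho>. ereal \<rho> < \<rho>s \<Longrightarrow> (W has_real_derivative (V \<rho>)) (at \<rho>)"
    and dV: "\<And>\<rho>. ereal \<rho> < \<rho>s \<Longrightarrow> (V has_real_derivative
               ((2 * N \<rho> - eym_kappa (r \<rho>) (W \<rho>) (V \<rho>) (N \<rho>)) * V \<rho>
                 - W \<rho> * (1 - (W \<rho>)\<^sup>2))) (at \<rho>)"
    and dN: "\<And>\<rho>. ereal \<rho> < \<rho>s \<Longrightarrow> (N has_real_derivative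
               ((eym_kappa (r \<rho>) (W \<rho>) (V \<rho>) (N \<rho>) - N \<rho>) * N \<rho>
                 - 2 * (V \<rho>)\<^sup>2 / (r \<rho>)\<^sup>2)) (at \<rho>)"
    and d\<delta>: "\<And>\<rho>. ereal \<rho> < \<rho>s \<Longrightarrow> ((\<lambda>s. exp (- \<delta> s) * N s) has_real_derivative
               ((eym_kappa (r \<rho>) (W \<rho>) (V \<rho>) (N \<rho>) - N \<rho>) * (exp (- \<delta> \<rho>) * N \<rho>))) (at \<rho>)"
    and reg_r: "r \<sim>[at_bot] (\<lambda>\<rho>. exp \<rho>)"
    and reg_W: "(\<lambda>\<rho>. W \<rho> - (- 1 + b * exp (2 * \<rho>))) \<in> o[at_bot](\<lambda>\<rho>. exp (2 * \<rho>))"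
    and reg_V: "(\<lambda>\<rho>. V \<rho> - 2 * b * exp (2 * \<rho>)) \<in> o[at_bot](\<lambda>\<rho>. exp (2 * \<rho>))"
    and reg_N: "(\<lambda>\<rho>. N \<rho> - (1 - 2 * b\<^sup>2 * exp (2 * \<rho>))) \<in> o[at_bot](\<lambda>\<rho>. exp (2 * \<rho>))"
    and reg_\<delta>: "(\<lambda>\<rho>. \<delta> \<rho> - (- 4 * b\<^sup>2 * exp (2 * \<rho>))) \<in> o[at_bot](\<lambda>\<rho>. exp (2 * \<rho>))"
  shows "\<forall>\<rho>. ereal \<rho> < \<rho>s \<longrightarrow>
           1 \<le> eym_kappa (r \<rho>) (W \<rho>) (V \<rho>) (N \<rho>) \<and>
           eym_kappa (r \<rho>) (W \<rho>) (V \<rho>) (N \<rho>) \<le> 2 - N \<rho>"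
proof (intro allI impI)
  fix \<rho>0 assume r0: "ereal \<rho>0 < \<rho>s"
  define k where "k \<rho> = eym_kappa (r \<rho>) (W \<rho>) (V \<rho>) (N \<rho>)" for \<rho>
  define E where "E \<rho> = exp (2 * \<rho>)" for \<rho> :: real
  have E0: "E \<rho> \<noteq> 0" for \<rho> unfolding E_def by simp
  have elim: "((\<lambda>\<rho>::real. exp \<rho>) \<longlongrightarrow> 0) at_bot" using exp_at_bot by simp
  have Ee: "E \<rho> = exp \<rho> * exp \<rho>" for \<rho> unfolding E_def by (simp add: mult_exp_exp)
  have Elim: "(E \<longlongrightarrow> 0) at_bot" unfolding Ee using tendsto_mult[OF elim elim] by simp
  have qW: "((\<lambda>\<rho>. (1 + W \<rho>) / E \<rho>) \<longlongrightarrow> b) at_bot"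
  proof -
    have "((\<lambda>\<rho>. (W \<rho> - (- 1 + b * E \<rho>)) / E \<rho> + b) \<longlongrightarrow> 0 + b) at_bot"
      using smalloD_tendsto[OF reg_W] unfolding E_def by (intro tendsto_add tendsto_const)
    moreover have "(\<lambda>\<rho>. (W \<rho> - (- 1 + b * E \<rho>)) / E \<rho> + b) = (\<lambda>\<rho>. (1 + W \<rho>) / E \<rho>)"
      using E0 by (auto simp: field_simps)
    ultimately show ?thesis by simp
  qed
  have qV: "((\<lambda>\<rho>. V \<rho> / E \<rho>) \<longlongrightarrow> 2 * b) at_bot"
  proof -
    have "((\<lambda>\<rho>. (V \<rho> - 2 * b * E \<rho>) / E \<rho> + 2 * b) \<longlongrightarrow> 0 + 2 * b) at_bot"
      using smalloD_tendsto[OF reg_V] unfolding E_def by (intro tendsto_add tendsto_const)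
    moreover have "(\<lambda>\<rho>. (V \<rho> - 2 * b * E \<rho>) / E \<rho> + 2 * b) = (\<lambda>\<rho>. V \<rho> / E \<rho>)"
      using E0 by (auto simp: field_simps)
    ultimately show ?thesis by simp
  qed
  have Nlim: "(N \<longlongrightarrow> 1) at_bot"
  proof -
    have "((\<lambda>\<rho>. (N \<rho> - (1 - 2 * b\<^sup>2 * E \<rho>)) / E \<rho> * E \<rho> + (1 - 2 * b\<^sup>2 * E \<rho>)) \<longlongrightarrow> 0 * 0 + (1 - 2 * b\<^sup>2 * 0)) at_bot"
      using smalloD_tendsto[OF reg_N] Elim unfolding E_def
      by (intro tendsto_add tendsto_mult tendsto_diff tendsto_const) auto
    moreover have "(\<lambda>\<rho>. (N \<rho> - (1 - 2 * b\<^sup>2 * E \<rho>)) / E \<rho> * E \<rho> + (1 - 2 * b\<^sup>2 * E \<rho>)) = N"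
      using E0 by (auto simp: field_simps)
    ultimately show ?thesis by simp
  qed
  have rl: "((\<lambda>\<rho>. exp \<rho> / r \<rho>) \<longlongrightarrow> 1) at_bot"
    using asymp_equivD[OF asymp_equiv_symI[OF reg_r]] by simp
  have Wl: "((\<lambda>\<rho>. 1 - W \<rho>) \<longlongrightarrow> 2) at_bot"
  proof -
    have "((\<lambda>\<rho>. 2 - (1 + W \<rho>) / E \<rho> * E \<rho>) \<longlongrightarrow> 2 - b * 0) at_bot"
      by (intro tendsto_intros qW Elim)
    moreover have "(\<lambda>\<rho>. 2 - (1 + W \<rho>) / E \<rho> * E \<rho>) = (\<lambda>\<rho>. 1 - W \<rho>)"
      using E0 by auto
    ultimately show ?thesis by simp
  qed
  have Vr: "((\<lambda>\<rho>. V \<rho> / r \<rho>) \<longlongrightarrow> 0) at_bot"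
  proof -
    have "((\<lambda>\<rho>. V \<rho> / E \<rho> * (exp \<rho> / r \<rho>) * exp \<rho>) \<longlongrightarrow> 2 * b * 1 * 0) at_bot"
      by (intro tendsto_intros qV rl elim)
    moreover have "(\<lambda>\<rho>. V \<rho> / E \<rho> * (exp \<rho> / r \<rho>) * exp \<rho>) = (\<lambda>\<rho>. V \<rho> / r \<rho>)"
      unfolding Ee by auto
    ultimately show ?thesis by simp
  qed
  have Ur: "((\<lambda>\<rho>. (1 - (W \<rho>)\<^sup>2) / r \<rho>) \<longlongrightarrow> 0) at_bot"
  proof -
    have "((\<lambda>\<rho>. (1 - W \<rho>) * ((1 + W \<rho>) / E \<rho>) * (exp \<rho> / r \<rho>) * exp \<rho>) \<longlongrightarrow> 2 * b * 1 * 0) at_bot"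
      by (intro tendsto_intros qW rl elim Wl)
    moreover have "(\<lambda>\<rho>. (1 - W \<rho>) * ((1 + W \<rho>) / E \<rho>) * (exp \<rho> / r \<rho>) * exp \<rho>) = (\<lambda>\<rho>. (1 - (W \<rho>)\<^sup>2) / r \<rho>)"
    proof (rule ext)
      fix \<rho> show "(1 - W \<rho>) * ((1 + W \<rho>) / E \<rho>) * (exp \<rho> / r \<rho>) * exp \<rho> = (1 - (W \<rho>)\<^sup>2) / r \<rho>"
        unfolding Ee by (cases "r \<rho> = 0") (simp_all add: field_simps power2_eq_square)
    qed
    ultimately show ?thesis by simp
  qed
  have klim: "(k \<longlongrightarrow> 1) at_bot"
  proof -
    have "((\<lambda>\<rho>. (1 / (2 * N \<rho>)) * (1 + (N \<rho>)\<^sup>2 + 2 * (V \<rho> / r \<rho>)\<^sup>2 - ((1 - (W \<rho>)\<^sup>2) / r \<rho>)\<^sup>2))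
       \<longlongrightarrow> (1 / (2 * 1)) * (1 + 1\<^sup>2 + 2 * 0\<^sup>2 - 0\<^sup>2)) at_bot"
      by (intro tendsto_intros Nlim Vr Ur) simp
    moreover have "(\<lambda>\<rho>. (1 / (2 * N \<rho>)) * (1 + (N \<rho>)\<^sup>2 + 2 * (V \<rho> / r \<rho>)\<^sup>2 - ((1 - (W \<rho>)\<^sup>2) / r \<rho>)\<^sup>2)) = k"
      unfolding k_def eym_kappa_def by (auto simp: power_divide)
    ultimately show ?thesis by simp
  qed
  have slim: "((\<lambda>\<rho>. k \<rho> + N \<rho>) \<longlongrightarrow> 2) at_bot"
    using tendsto_add[OF klim Nlim] by simp
  have le: "ereal \<rho> < \<rho>s" if "\<rho> \<le> \<rho>0" for \<rho>
    using r0 that by (meson ereal_less_eq(3) order_le_less_trans)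
  have dk: "(k has_real_derivative (1 - (k \<rho>)\<^sup>2 + 2 * (V \<rho>)\<^sup>2 / (r \<rho>)\<^sup>2)) (at \<rho>)"
    if "\<rho> \<le> \<rho>0" for \<rho>
    unfolding k_def[abs_def] k_def
    by (rule dkappa) (use pos[OF le[OF that]] dr[OF le[OF that]] dW[OF le[OF that]]
         dV[OF le[OF that]] dN[OF le[OF that]] in auto)
  have ds: "((\<lambda>\<rho>. k \<rho> + N \<rho>) has_real_derivative
      (1 - (k \<rho>)\<^sup>2 + k \<rho> * N \<rho> - (N \<rho>)\<^sup>2)) (at \<rho>)" if "\<rho> \<le> \<rho>0" for \<rho>
  proof -
    have "((\<lambda>\<rho>. k \<rho> + N \<rho>) has_real_derivative
      (1 - (k \<rho>)\<^sup>2 + 2 * (V \<rho>)\<^sup>2 / (r \<rho>)\<^sup>2) + ((k \<rho> - N \<rho>) * N \<rho> - 2 * (V \<rho>)\<^sup>2 / (r \<rho>)\<^sup>2)) (at \<rho>)"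
      using DERIV_add[OF dk[OF that] dN[OF le[OF that]]] unfolding k_def by simp
    thus ?thesis by (simp add: algebra_simps power2_eq_square)
  qed
  have low: "1 \<le> k \<rho>0"
  proof (rule ccontr)
    assume "\<not> 1 \<le> k \<rho>0"
    define c where "c = (max (k \<rho>0) 0 + 1) / 2"
    have c: "0 < c" "c < 1" "k \<rho>0 < c" using \<open>\<not> 1 \<le> k \<rho>0\<close> unfolding c_def by auto
    have "eventually (\<lambda>\<rho>. k \<rho> > c) at_bot" using order_tendstoD(1)[OF klim c(2)] .
    then obtain T where T: "\<And>\<rho>. \<rho> \<le> T \<Longrightarrow> k \<rho> > c" by (auto simp: eventually_at_bot_linorder)
    define \<rho>1 where "\<rho>1 = min T (\<rho>0 - 1)"
    have "\<exists>x\<in>{\<rho>1..<\<rho>0}. k x = c \<and> 1 - (k x)\<^sup>2 + 2 * (V x)\<^sup>2 / (r x)\<^sup>2 \<le> 0"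
      by (rule cross[where f = k]) (use dk T c in \<open>auto simp: \<rho>1_def less_imp_le\<close>)
    then obtain x where kx: "k x = c" and le0: "1 - (k x)\<^sup>2 + 2 * (V x)\<^sup>2 / (r x)\<^sup>2 \<le> 0" by auto
    have "1 - c\<^sup>2 + 2 * (V x)\<^sup>2 / (r x)\<^sup>2 \<le> 0" using le0 kx by simp
    moreover have "c\<^sup>2 < 1" proof -
      have "c * c < c * 1" using mult_strict_left_mono[OF c(2) c(1)] .
      thus ?thesis using c unfolding power2_eq_square by linarith
    qed
    moreover have "2 * (V x)\<^sup>2 / (r x)\<^sup>2 \<ge> 0" by simp
    ultimately show False by linarith
  qed
  have up: "k \<rho>0 + N \<rho>0 \<le> 2"
  proof (rule ccontr)
    assume "\<not> k \<rho>0 + N \<rho>0 \<le> 2"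
    define c where "c = (k \<rho>0 + N \<rho>0 + 2) / 2"
    have c: "2 < c" "c < k \<rho>0 + N \<rho>0" using \<open>\<not> k \<rho>0 + N \<rho>0 \<le> 2\<close> unfolding c_def by auto
    have "eventually (\<lambda>\<rho>. k \<rho> + N \<rho> < c) at_bot" using order_tendstoD(2)[OF slim c(1)] .
    then obtain T where T: "\<And>\<rho>. \<rho> \<le> T \<Longrightarrow> k \<rho> + N \<rho> < c" by (auto simp: eventually_at_bot_linorder)
    define \<rho>1 where "\<rho>1 = min T (\<rho>0 - 1)"
    have "\<exists>x\<in>{\<rho>1..<\<rho>0}. - (k x + N x) = - c \<and> - (1 - (k x)\<^sup>2 + k x * N x - (N x)\<^sup>2) \<le> 0"
    proof (rule cross[where f = "\<lambda>\<rho>. - (k \<rho> + N \<rho>)"])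
      show "((\<lambda>\<rho>. - (k \<rho> + N \<rho>)) has_real_derivative - (1 - (k x)\<^sup>2 + k x * N x - (N x)\<^sup>2)) (at x)"
        if "x \<in> {\<rho>1..\<rho>0}" for x using DERIV_minus[OF ds[of x]] that by simp
    next
      have "k \<rho>1 + N \<rho>1 < c" using T[of \<rho>1] unfolding \<rho>1_def by simp
      thus "- c \<le> - (k \<rho>1 + N \<rho>1)" by simp
    qed (use c in \<open>auto simp: \<rho>1_def\<close>)
    then obtain x where x0: "- (k x + N x) = - c" and x1: "- (1 - (k x)\<^sup>2 + k x * N x - (N x)\<^sup>2) \<le> 0" by blast
    have x: "k x + N x = c" "1 - (k x)\<^sup>2 + k x * N x - (N x)\<^sup>2 \<ge> 0" using x0 x1 by linarith+
    have "1 - (k x)\<^sup>2 + k x * N x - (N x)\<^sup>2 = - 3 * (N x - 1 - (c - 2) / 2)\<^sup>2 - (c - 2)\<^sup>2 / 4 - (c - 2)"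
    proof -
      have kx: "k x = c - N x" using x(1) by linarith
      show ?thesis unfolding kx by (simp add: power2_eq_square field_simps)
    qed
    moreover have "(N x - 1 - (c - 2) / 2)\<^sup>2 \<ge> 0" "(c - 2)\<^sup>2 \<ge> 0" by simp_all
    ultimately show False using x(2) c(1) by linarith
  qed
  show "1 \<le> eym_kappa (r \<rho>0) (W \<rho>0) (V \<rho>0) (N \<rho>0) \<and>
           eym_kappa (r \<rho>0) (W \<rho>0) (V \<rho>0) (N \<rho>0) \<le> 2 - N \<rho>0"
    using low up unfolding k_def by simp
qed

end
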